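(* Let $\tau$ be a normalized POV measure on $\mathcal M$ (so $\tau(\mathcal M)=1$) which is covariant under space-time translations, i.e. $\exp(-ix_\alpha P^\alpha)\,\tau(I+x)\,\exp(ix_\alpha P^\alpha)=\tau(I)$ for every Borel set $I\subset\mathcal M$ and every $x\in\mathcal M$. Then for every nonzero $\psi\in\mathcal H$ and every non-empty open set $I\subset\mathcal M$, $$(\psi,\tau(I)\psi)>0 .$$
   Context: $\mathcal M=\mathbb R^4$ is Minkowski space-time with metric $g=\mathrm{diag}(1,-1,-1,-1)$, and $x_\alpha k^\alpha=g_{\alpha\beta}x^\alpha k^\beta$. $\mathcal H$ is a separable complex Hilbert space on which $P^0,\dots,P^3$ are commuting self-adjoint operators (the four-momentum), generating the unitary translation group $x\mapsto\exp(ix_\alpha P^\alpha)$, whose joint spectrum is contained in the closed future cone $\{k: k_\alpha k^\alpha\ge 0,\ k^0\ge 0\}$. A POV (positive operator valued) measure $\tau$ on $\mathcal M$ assigns to each Borel set $I\subset\mathcal M$ a bounded positive operator $\tau(I)$ on $\mathcal H$, countably additive in the weak operator topology; it is normalized if $\tau(\mathcal M)=1$. *)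

theory Defs
  imports "HOL-Analysis.Analysis" "HOL-Library.Complex_Order"
begin

type_synonym spacetime = "real ^ 4"

definition mink :: "spacetime \<Rightarrow> spacetime \<Rightarrow> real" where
  "mink x k = x $ 0 * k $ 0 - x $ 1 * k $ 1 - x $ 2 * k $ 2 - x $ 3 * k $ 3"

definition future_cone :: "spacetime set" where
  "future_cone = {k. mink k k \<ge> 0 \<and> k $ 0 \<ge> 0}"

text \<open>A separable complex Hilbert space, modelled (up to unitary equivalence) as
  l^2 over a countable index type 'i.  Vectors are functions 'i => complex that are
  square summable; operators are functions on such vectors (only their values on l2 matter).\<close>

definition l2 :: "('i::countable \<Rightarrow> complex) set" where
  "l2 = {\<psi>. (\<lambda>i. (cmod (\<psi> i))\<^sup>2) summable_on UNIV}"

definition l2_inner :: "('i::countable \<Rightarrow> complex) \<Rightarrow> ('i \<Rightarrow> complex) \<Rightarrow> complex" where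
  "l2_inner \<phi> \<psi> = (\<Sum>\<^sub>\<infinity>i. cnj (\<phi> i) * \<psi> i)"

definition l2_norm :: "('i::countable \<Rightarrow> complex) \<Rightarrow> real" where
  "l2_norm \<psi> = sqrt (\<Sum>\<^sub>\<infinity>i. (cmod (\<psi> i))\<^sup>2)"

type_synonym 'i op = "('i \<Rightarrow> complex) \<Rightarrow> ('i \<Rightarrow> complex)"

definition bounded_op :: "'i::countable op \<Rightarrow> bool" where
  "bounded_op A \<longleftrightarrow>
     (\<forall>\<psi>\<in>l2. A \<psi> \<in> l2) \<and>
     (\<forall>\<phi>\<in>l2. \<forall>\<psi>\<in>l2. \<forall>a b. A (\<lambda>i. a * \<phi> i + b * \<psi> i) = (\<lambda>i. a * A \<phi> i + b * A \<psi> i)) \<and>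
     (\<exists>C. \<forall>\<psi>\<in>l2. l2_norm (A \<psi>) \<le> C * l2_norm \<psi>)"

definition positive_op :: "'i::countable op \<Rightarrow> bool" where
  "positive_op A \<longleftrightarrow> bounded_op A \<and> (\<forall>\<psi>\<in>l2. l2_inner \<psi> (A \<psi>) \<ge> 0)"

definition weakly_countably_additive :: "(spacetime set \<Rightarrow> 'i::countable op) \<Rightarrow> bool" where
  "weakly_countably_additive T \<longleftrightarrow>
     (\<forall>I :: nat \<Rightarrow> spacetime set. (\<forall>n. I n \<in> sets borel) \<longrightarrow> disjoint_family I \<longrightarrow>
        (\<forall>\<phi>\<in>l2. \<forall>\<psi>\<in>l2. (\<lambda>n. l2_inner \<phi> (T (I n) \<psi>)) sums l2_inner \<phi> (T (\<Union>n. I n) \<psi>)))"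

definition POV_measure :: "(spacetime set \<Rightarrow> 'i::countable op) \<Rightarrow> bool" where
  "POV_measure \<tau> \<longleftrightarrow> (\<forall>I\<in>sets borel. positive_op (\<tau> I)) \<and> weakly_countably_additive \<tau>"

definition normalized :: "(spacetime set \<Rightarrow> 'i::countable op) \<Rightarrow> bool" where
  "normalized \<tau> \<longleftrightarrow> (\<forall>\<psi>\<in>l2. \<tau> UNIV \<psi> = \<psi>)"

definition PV_measure :: "(spacetime set \<Rightarrow> 'i::countable op) \<Rightarrow> bool" where
  "PV_measure E \<longleftrightarrow>
     (\<forall>I\<in>sets borel. bounded_op (E I) \<and>
        (\<forall>\<psi>\<in>l2. E I (E I \<psi>) = E I \<psi>) \<and>
        (\<forall>\<phi>\<in>l2. \<forall>\<psi>\<in>l2. l2_inner \<phi> (E I \<psi>) = l2_inner (E I \<phi>) \<psi>)) \<and>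
     (\<forall>\<psi>\<in>l2. E UNIV \<psi> = \<psi>) \<and>
     weakly_countably_additive E"

definition spectral_measure :: "(spacetime set \<Rightarrow> 'i::countable op) \<Rightarrow> ('i \<Rightarrow> complex) \<Rightarrow> spacetime measure" where
  "spectral_measure E \<psi> = measure_of UNIV (sets borel) (\<lambda>B. ennreal (Re (l2_inner \<psi> (E B \<psi>))))"

text \<open>The four-momentum P^0..P^3: commuting self-adjoint operators, given through their
  joint spectral measure E (P^a = integral of k^a dE(k)), with joint spectrum contained in
  the closed future cone, generating the translations U x = exp(i x_a P^a)
  = integral of exp(i x_a k^a) dE(k).  Since H is complex, U x is determined by its
  diagonal matrix elements.\<close>
definition four_momentum_translations :: "(spacetime set \<Rightarrow> 'i::countable op) \<Rightarrow> (spacetime \<Rightarrow> 'i op) \<Rightarrow> bool" where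
  "four_momentum_translations E U \<longleftrightarrow>
     PV_measure E \<and>
     (\<forall>\<psi>\<in>l2. E future_cone \<psi> = \<psi>) \<and>
     (\<forall>x. bounded_op (U x) \<and>
        (\<forall>\<psi>\<in>l2. l2_inner \<psi> (U x \<psi>) =
            (\<integral>k. cis (mink x k) \<partial>spectral_measure E \<psi>)))"

end

theory Submission
  imports Defs "HOL-Complex_Analysis.Complex_Analysis"
begin

no_notation fps_nth (infixl \<open>$\<close> 75)


lemma norm_exp_sub_lin:
  fixes z :: complex
  shows "norm (exp z - 1 - z) \<le> norm z ^ 2 * exp (norm z)"
proof -
  have sums: "(\<lambda>k. z ^ (k + 2) /\<^sub>R fact (k + 2)) sums (exp z - (\<Sum>k<2. z ^ k /\<^sub>R fact k))"
    by (intro sums_split_initial_segment exp_converges)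
  have e: "exp z - 1 - z = (\<Sum>k. z ^ (k + 2) /\<^sub>R fact (k + 2))"
    using sums by (simp add: sums_iff eval_nat_numeral)
  have sn: "summable (\<lambda>k. norm (z ^ (k + 2) /\<^sub>R fact (k + 2)))"
    using summable_norm_exp[of z]
    by (intro summable_norm summable_ignore_initial_segment) (auto simp: norm_power)
  have s2: "(\<lambda>k. norm z ^ 2 * (norm z ^ k /\<^sub>R fact k)) sums (norm z ^ 2 * exp (norm z))"
    by (intro sums_mult exp_converges)
  have "norm (exp z - 1 - z) \<le> (\<Sum>k. norm (z ^ (k + 2) /\<^sub>R fact (k + 2)))"
    unfolding e by (rule summable_norm[OF sn])
  also have "\<dots> \<le> norm z ^ 2 * exp (norm z)"
  proof (rule sums_le[OF _ summable_sums[OF sn] s2])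
    fix k
    have "fact k \<le> (fact (k+2) :: real)" by (intro fact_mono) auto
    then have "norm z ^ (k+2) / fact (k+2) \<le> norm z ^ (k+2) / (fact k :: real)"
      by (intro divide_left_mono) auto
    moreover have "norm (z ^ (k + 2) /\<^sub>R fact (k + 2)) = norm z ^ (k+2) / fact (k+2)"
      by (simp add: norm_divide norm_power norm_mult field_simps del: of_nat_Suc of_nat_add fact_Suc)
    moreover have "norm z ^ 2 * (norm z ^ k /\<^sub>R fact k) = norm z ^ (k+2) / fact k"
      by (simp add: power_add field_simps power2_eq_square)
    ultimately show "norm (z ^ (k + 2) /\<^sub>R fact (k + 2)) \<le> norm z ^ 2 * (norm z ^ k /\<^sub>R fact k)"
      by simp
  qed
  finally show ?thesis .
qed

lemma sq_exp_bound:
  fixes a l :: real assumes "0 < a" "0 \<le> l"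
  shows "l ^ 2 * exp (- (a * l)) \<le> 2 / a ^ 2"
proof -
  have "1 + a*l + (a*l)^2/2 \<le> exp (a*l)" using assms by (intro exp_lower_Taylor_quadratic) simp
  then have "(a*l)^2/2 \<le> exp (a*l)" using assms by (smt (verit) mult_nonneg_nonneg)
  then have "l^2 \<le> 2/a^2 * exp (a*l)" using assms by (simp add: field_simps power_mult_distrib)
  then show ?thesis by (simp add: exp_minus field_simps)
qed

lemma lin_exp_bound:
  fixes a l :: real assumes "0 < a" "0 \<le> l"
  shows "l * exp (- (a * l)) \<le> 1 / a"
proof -
  have "1 + a*l \<le> exp (a*l)" using exp_ge_add_one_self by blast
  then have "a * l \<le> exp (a*l)" by linarith
  then have "l \<le> 1/a * exp (a*l)" using assms by (simp add: field_simps)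
  then show ?thesis by (simp add: exp_minus field_simps)
qed

lemma pointwise_bound:
  fixes z h :: complex and l :: real
  assumes y: "0 < Im z" and h: "norm h \<le> Im z / 2" and l: "0 \<le> l"
  shows "norm (exp (\<i> * (z + h) * l) - exp (\<i> * z * l) - h * (\<i> * l * exp (\<i> * z * l)))
           \<le> norm h ^ 2 * (8 / Im z ^ 2)"
proof -
  define w where "w = \<i> * h * l"
  have "exp (\<i> * (z + h) * l) - exp (\<i> * z * l) - h * (\<i> * l * exp (\<i> * z * l))
        = exp (\<i> * z * l) * (exp w - 1 - w)"
    by (simp add: w_def algebra_simps exp_add[symmetric])
  also have "norm \<dots> = exp (- (Im z * l)) * norm (exp w - 1 - w)"
    by (simp add: norm_mult norm_exp_eq_Re)
  also have "\<dots> \<le> exp (- (Im z * l)) * (norm w ^ 2 * exp (norm w))"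
    by (intro mult_left_mono norm_exp_sub_lin) auto
  also have "norm w = norm h * l" using l by (simp add: w_def norm_mult)
  also have "exp (- (Im z * l)) * ((norm h * l) ^ 2 * exp (norm h * l))
         = norm h ^ 2 * (l^2 * (exp (- (Im z * l)) * exp (norm h * l)))"
    by (simp add: power_mult_distrib mult_ac)
  also have "exp (- (Im z * l)) * exp (norm h * l) \<le> exp (- ((Im z / 2) * l))"
    unfolding exp_add[symmetric] using h l mult_right_mono[OF h l] by (intro exp_mono) (simp add: algebra_simps)
  then have "norm h ^ 2 * (l^2 * (exp (- (Im z * l)) * exp (norm h * l)))
        \<le> norm h ^ 2 * (l^2 * exp (- ((Im z / 2) * l)))"
    by (intro mult_left_mono) auto
  also have "l^2 * exp (- ((Im z / 2) * l)) \<le> 2 / (Im z / 2) ^ 2"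
    using y l by (intro sq_exp_bound) auto
  then have "norm h ^ 2 * (l^2 * exp (- ((Im z / 2) * l))) \<le> norm h ^ 2 * (2 / (Im z / 2) ^ 2)"
    by (intro mult_left_mono) auto
  also have "2 / (Im z / 2) ^ 2 = 8 / Im z ^ 2" by (simp add: power_divide)
  finally show ?thesis by simp
qed

lemma meas_exp_lam: "lam \<in> borel_measurable M \<Longrightarrow> (\<lambda>x. exp (c * complex_of_real (lam x))) \<in> borel_measurable M"
  by (rule measurable_compose[OF _ borel_measurable_continuous_onI[of "\<lambda>t::real. exp (c * complex_of_real t)"]])
     (auto intro!: continuous_intros)

lemma meas_int: "g \<in> borel_measurable M \<Longrightarrow> lam \<in> borel_measurable M \<Longrightarrow>
   (\<lambda>k. g k * exp (c * complex_of_real (lam k))) \<in> borel_measurable M"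
  by (intro borel_measurable_times meas_exp_lam)

lemma norm_int_le:
  fixes f :: "'a \<Rightarrow> 'b::{banach,second_countable_topology}"
  assumes "finite_measure M" "integrable M f" "\<And>k. norm (f k) \<le> C"
  shows "norm (integral\<^sup>L M f) \<le> C * measure M (space M)"
proof -
  have "norm (integral\<^sup>L M f) \<le> (\<integral>k. norm (f k) \<partial>M)" by (rule integral_norm_bound)
  also have "\<dots> \<le> (\<integral>k. C \<partial>M)"
    using assms by (intro integral_mono finite_measure.integrable_const) auto
  also have "\<dots> = C * measure M (space M)" by simp
  finally show ?thesis .
qed

lemma norm_exp_upper: "0 \<le> Im w \<Longrightarrow> 0 \<le> l \<Longrightarrow> norm (exp (\<i> * w * complex_of_real l)) \<le> 1"
  by (simp add: norm_exp_eq_Re mult_nonneg_nonneg)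

lemma F_int:
  assumes fin: "finite_measure M" and gm: "g \<in> borel_measurable M" and gb: "\<And>k. norm (g k) \<le> B"
    and lm: "lam \<in> borel_measurable M" and lpos: "\<And>k. 0 \<le> lam k" and w: "0 \<le> Im w"
  shows "integrable M (\<lambda>k. g k * exp (\<i> * w * complex_of_real (lam k)))"
proof (rule finite_measure.integrable_const_bound[OF fin, where B=B])
  show "AE x in M. norm (g x * exp (\<i> * w * complex_of_real (lam x))) \<le> B"
  proof (intro AE_I2)
    fix x
    have "norm (g x * exp (\<i> * w * complex_of_real (lam x))) \<le> norm (g x) * 1"
      unfolding norm_mult by (intro mult_left_mono norm_exp_upper w lpos) auto
    then show "norm (g x * exp (\<i> * w * complex_of_real (lam x))) \<le> B" using gb[of x] by simp
  qed
qed (rule meas_int[OF gm lm])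

lemma F_holo:
  assumes fin: "finite_measure M" and gm: "g \<in> borel_measurable M" and gb: "\<And>k. norm (g k) \<le> B"
    and lm: "lam \<in> borel_measurable M" and lpos: "\<And>k. 0 \<le> lam k"
  shows "(\<lambda>z. \<integral>k. g k * exp (\<i> * z * complex_of_real (lam k)) \<partial>M) holomorphic_on {z. 0 < Im z}"
proof -
  define F where "F = (\<lambda>z. \<integral>k. g k * exp (\<i> * z * complex_of_real (lam k)) \<partial>M)"
  have B0: "0 \<le> B" using gb[of undefined] norm_ge_zero[of "g undefined"] by linarith
  have "\<exists>D. (F has_field_derivative D) (at z)" if z: "0 < Im z" for z
  proof -
    define y where "y = Im z"
    have y: "0 < y" using z y_def by simp
    define D where "D = (\<integral>k. g k * (\<i> * complex_of_real (lam k) * exp (\<i> * z * complex_of_real (lam k))) \<partial>M)"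
    have Dint: "integrable M (\<lambda>k. g k * (\<i> * complex_of_real (lam k) * exp (\<i> * z * complex_of_real (lam k))))"
    proof (rule finite_measure.integrable_const_bound[OF fin, where B="B * (1/y)"])
      show "AE x in M. norm (g x * (\<i> * complex_of_real (lam x) * exp (\<i> * z * complex_of_real (lam x)))) \<le> B * (1/y)"
      proof (intro AE_I2)
        fix x
        have "norm (\<i> * complex_of_real (lam x) * exp (\<i> * z * complex_of_real (lam x)))
              = lam x * exp (- (y * lam x))"
          using lpos[of x] by (simp add: norm_mult norm_exp_eq_Re y_def)
        also have "\<dots> \<le> 1 / y" by (rule lin_exp_bound[OF y lpos])
        finally show "norm (g x * (\<i> * complex_of_real (lam x) * exp (\<i> * z * complex_of_real (lam x)))) \<le> B * (1/y)"
          unfolding norm_mult[of "g x"] using gb[of x] B0 by (intro mult_mono) auto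
      qed
      show "(\<lambda>k. g k * (\<i> * complex_of_real (lam k) * exp (\<i> * z * complex_of_real (lam k)))) \<in> borel_measurable M"
        using gm lm meas_exp_lam[OF lm, of "\<i> * z"] by measurable
    qed
    define C where "C = B * (8 / y^2) * measure M (space M)"
    have key: "norm (F w - F z - (w - z) * D) \<le> C * norm (w - z) ^ 2" if wz: "norm (w - z) < y / 2" for w
    proof -
      have "\<bar>Im w - Im z\<bar> \<le> norm (w - z)" using abs_Im_le_cmod[of "w - z"] by simp
      then have wpos: "0 \<le> Im w" using wz y_def y by linarith
        let ?f1 = "\<lambda>k. g k * exp (\<i> * w * complex_of_real (lam k))"
        let ?f2 = "\<lambda>k. g k * exp (\<i> * z * complex_of_real (lam k))"
        let ?f3 = "\<lambda>k. g k * (\<i> * complex_of_real (lam k) * exp (\<i> * z * complex_of_real (lam k)))"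
        have i1: "integrable M ?f1" by (rule F_int[OF fin gm gb lm lpos wpos])
        have i2: "integrable M ?f2" using z by (intro F_int[OF fin gm gb lm lpos]) auto
        have e: "(\<lambda>k. g k * (exp (\<i> * (z + (w - z)) * complex_of_real (lam k)) - exp (\<i> * z * complex_of_real (lam k))
           - (w - z) * (\<i> * complex_of_real (lam k) * exp (\<i> * z * complex_of_real (lam k)))))
           = (\<lambda>k. (?f1 k - ?f2 k) - (w - z) * ?f3 k)"
          by (simp add: algebra_simps)
      have "F w - F z - (w - z) * D =
         (\<integral>k. g k * (exp (\<i> * (z + (w - z)) * complex_of_real (lam k)) - exp (\<i> * z * complex_of_real (lam k))
           - (w - z) * (\<i> * complex_of_real (lam k) * exp (\<i> * z * complex_of_real (lam k)))) \<partial>M)"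
      proof -
        have "(\<integral>k. (?f1 k - ?f2 k) - (w - z) * ?f3 k \<partial>M) = (\<integral>k. ?f1 k - ?f2 k \<partial>M) - (\<integral>k. (w - z) * ?f3 k \<partial>M)"
          using Bochner_Integration.integral_diff[OF Bochner_Integration.integrable_diff[OF i1 i2] Bochner_Integration.integrable_mult_right[OF Dint, of "w - z"]] by simp
        also have "\<dots> = F w - F z - (w - z) * D"
          unfolding F_def D_def using i1 i2 by simp
        finally show ?thesis unfolding e by simp
      qed
      also have "norm \<dots> \<le> (B * (norm (w - z) ^ 2 * (8 / Im z ^ 2))) * measure M (space M)"
      proof (rule norm_int_le[OF fin])
        show "integrable M (\<lambda>k. g k * (exp (\<i> * (z + (w - z)) * complex_of_real (lam k)) - exp (\<i> * z * complex_of_real (lam k))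
           - (w - z) * (\<i> * complex_of_real (lam k) * exp (\<i> * z * complex_of_real (lam k)))))"
          unfolding e by (intro Bochner_Integration.integrable_diff i1 i2 Bochner_Integration.integrable_mult_right Dint)
        fix k
        have "norm (exp (\<i> * (z + (w - z)) * complex_of_real (lam k)) - exp (\<i> * z * complex_of_real (lam k))
           - (w - z) * (\<i> * complex_of_real (lam k) * exp (\<i> * z * complex_of_real (lam k))))
           \<le> norm (w - z) ^ 2 * (8 / Im z ^ 2)"
          using wz y_def z lpos[of k] by (intro pointwise_bound) auto
        then show "norm (g k * (exp (\<i> * (z + (w - z)) * complex_of_real (lam k)) - exp (\<i> * z * complex_of_real (lam k))
           - (w - z) * (\<i> * complex_of_real (lam k) * exp (\<i> * z * complex_of_real (lam k)))))
           \<le> B * (norm (w - z) ^ 2 * (8 / Im z ^ 2))"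
          unfolding norm_mult[of "g k"] using gb[of k] B0 by (intro mult_mono) auto
      qed
      also have "\<dots> = C * norm (w - z) ^ 2" by (simp add: C_def y_def)
      finally show ?thesis .
    qed
    have "((\<lambda>w. (F w - F z) / (w - z) - D) \<longlongrightarrow> 0) (at z)"
    proof (rule Lim_null_comparison)
      have ev: "\<forall>\<^sub>F w in at z. w \<noteq> z \<and> dist w z < y / 2"
        using y by (auto simp: eventually_at_filter eventually_nhds_metric intro!: exI[of _ "y/2"])
      show "\<forall>\<^sub>F w in at z. norm ((F w - F z) / (w - z) - D) \<le> C * norm (w - z)"
        using ev
      proof eventually_elim
        case (elim w)
        then have nz: "w - z \<noteq> 0" and lt: "norm (w - z) < y/2" by (auto simp: dist_norm)
        have "(F w - F z) / (w - z) - D = (F w - F z - (w - z) * D) / (w - z)"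
          using nz by (simp add: field_simps)
        then have "norm ((F w - F z) / (w - z) - D) = norm (F w - F z - (w - z) * D) / norm (w - z)"
          by (simp add: norm_divide)
        also have "\<dots> \<le> C * norm (w - z) ^ 2 / norm (w - z)"
          using key[OF lt] nz by (intro divide_right_mono) auto
        also have "\<dots> = C * norm (w - z)" using nz by (simp add: power2_eq_square)
        finally show ?case .
      qed
      show "((\<lambda>w. C * norm (w - z)) \<longlongrightarrow> 0) (at z)"
        by (rule tendsto_eq_intros | simp)+
    qed
    then have "((\<lambda>w. (F w - F z) / (w - z)) \<longlongrightarrow> D) (at z)" using Lim_null by blast
    then show ?thesis using has_field_derivative_iff by blast
  qed
  moreover have "open {z. 0 < Im z}" by (rule open_halfspace_Im_gt)
  ultimately show ?thesis unfolding F_def[symmetric] using holomorphic_on_open by blast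
qed


lemma F_cont:
  assumes fin: "finite_measure M" and gm: "g \<in> borel_measurable M" and gb: "\<And>k. norm (g k) \<le> B"
    and lm: "lam \<in> borel_measurable M" and lpos: "\<And>k. 0 \<le> lam k"
  shows "continuous_on {z. 0 \<le> Im z} (\<lambda>z. \<integral>k. g k * exp (\<i> * z * complex_of_real (lam k)) \<partial>M)"
proof (rule continuous_on_sequentiallyI)
  fix u :: "nat \<Rightarrow> complex" and a
  assume u: "\<forall>n. u n \<in> {z. 0 \<le> Im z}" and a: "a \<in> {z. 0 \<le> Im z}" and lim: "u \<longlonglongrightarrow> a"
  show "(\<lambda>n. \<integral>k. g k * exp (\<i> * u n * complex_of_real (lam k)) \<partial>M) \<longlonglongrightarrow> (\<integral>k. g k * exp (\<i> * a * complex_of_real (lam k)) \<partial>M)"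
  proof (rule integral_dominated_convergence[where w="\<lambda>_. B"])
    show "(\<lambda>k. g k * exp (\<i> * a * complex_of_real (lam k))) \<in> borel_measurable M"
      by (rule meas_int[OF gm lm])
    show "\<And>n. (\<lambda>k. g k * exp (\<i> * u n * complex_of_real (lam k))) \<in> borel_measurable M"
      by (rule meas_int[OF gm lm])
    show "integrable M (\<lambda>_. B)" using fin by (rule finite_measure.integrable_const)
    show "AE k in M. (\<lambda>n. g k * exp (\<i> * u n * complex_of_real (lam k))) \<longlonglongrightarrow> g k * exp (\<i> * a * complex_of_real (lam k))"
      using lim by (intro AE_I2 tendsto_intros) auto
    show "\<And>n. AE k in M. norm (g k * exp (\<i> * u n * complex_of_real (lam k))) \<le> B"
    proof (intro AE_I2)
      fix n k
      have "norm (g k * exp (\<i> * u n * complex_of_real (lam k))) \<le> norm (g k) * 1"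
        unfolding norm_mult using u by (intro mult_left_mono norm_exp_upper lpos) auto
      then show "norm (g k * exp (\<i> * u n * complex_of_real (lam k))) \<le> B" using gb[of k] by simp
    qed
  qed
qed


lemma half_line_zero:
  fixes M :: "nat \<Rightarrow> 'a measure" and g :: "nat \<Rightarrow> 'a \<Rightarrow> complex" and lam :: "'a \<Rightarrow> real"
  assumes fin: "\<And>j. j < n \<Longrightarrow> finite_measure (M j)"
    and gm: "\<And>j. j < n \<Longrightarrow> g j \<in> borel_measurable (M j)"
    and gb: "\<And>j k. norm (g j k) \<le> B"
    and lm: "\<And>j. j < n \<Longrightarrow> lam \<in> borel_measurable (M j)"
    and lpos: "\<And>k. 0 \<le> lam k"
    and d: "0 < d"
    and zero: "\<And>t. \<bar>t\<bar> < d \<Longrightarrow> (\<Sum>j<n. \<integral>k. g j k * exp (\<i> * complex_of_real t * complex_of_real (lam k)) \<partial>M j) = 0"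
  shows "(\<Sum>j<n. \<integral>k. g j k * exp (\<i> * complex_of_real t * complex_of_real (lam k)) \<partial>M j) = 0"
proof -
  define F where "F = (\<lambda>z. \<Sum>j<n. \<integral>k. g j k * exp (\<i> * z * complex_of_real (lam k)) \<partial>M j)"
  have holF: "F holomorphic_on {z. 0 < Im z}"
    unfolding F_def by (intro holomorphic_on_sum F_holo[OF fin gm gb lm lpos]) auto
  have contF: "continuous_on {z. 0 \<le> Im z} F"
    unfolding F_def by (intro continuous_on_sum F_cont[OF fin gm gb lm lpos]) auto
  define S where "S = ball (0::complex) d"
  define H where "H = (\<lambda>z. if 0 \<le> Im z then F z else cnj (F (cnj z)))"
  have F0: "F (complex_of_real t) = 0" if "\<bar>t\<bar> < d" for t
    using zero[OF that] by (simp add: F_def)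
  have holH: "H holomorphic_on S"
    unfolding H_def
  proof (rule Schwarz_reflection)
    show "open S" by (simp add: S_def)
    show "cnj ` S \<subseteq> S" by (auto simp: S_def)
    show "F holomorphic_on S \<inter> {z. 0 < Im z}" by (rule holomorphic_on_subset[OF holF]) auto
    show "continuous_on (S \<inter> {z. 0 \<le> Im z}) F" by (rule continuous_on_subset[OF contF]) auto
    fix z assume "z \<in> S" "z \<in> \<real>"
    then obtain t where t: "z = complex_of_real t" by (auto elim: Reals_cases)
    with \<open>z \<in> S\<close> have "\<bar>t\<bar> < d" by (simp add: S_def)
    then show "F z \<in> \<real>" using F0 t by simp
  qed
  define U where "U = complex_of_real ` {0<..<d}"
  have "0 islimpt U"
  proof (rule islimpt_approachable[THEN iffD2], intro allI impI)
    fix e :: real assume "0 < e"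
    let ?x = "complex_of_real (min e d / 2)"
    have "?x \<in> U" unfolding U_def using \<open>0 < e\<close> d by (intro image_eqI[where x="min e d / 2"]) auto
    moreover have "?x \<noteq> 0" "dist ?x 0 < e" using \<open>0 < e\<close> d by auto
    ultimately show "\<exists>x'\<in>U. x' \<noteq> 0 \<and> dist x' 0 < e" by blast
  qed
  have H0: "H w = 0" if "w \<in> S" for w
  proof (rule analytic_continuation[OF holH _ _ _ _ \<open>0 islimpt U\<close>])
    show "open S" "connected S" by (auto simp: S_def)
    show "U \<subseteq> S" "0 \<in> S" using d by (auto simp: U_def S_def)
    show "\<And>z. z \<in> U \<Longrightarrow> H z = 0" using F0 by (auto simp: U_def H_def)
  qed (fact that)
  define c where "c = \<i> * complex_of_real (d / 2)"
  have Fup: "F w = 0" if "0 < Im w" for w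
  proof (rule analytic_continuation[OF holF, where U="ball c (d/2)" and \<xi>=c])
    show "w \<in> {z. 0 < Im z}" using that by simp
    show "open {z. 0 < Im z}" by (rule open_halfspace_Im_gt)
    show "connected {z. 0 < Im z}" by (rule connected_halfspace_Im_gt)
    have sub: "ball c (d/2) \<subseteq> S \<inter> {z. 0 < Im z}"
    proof
      fix z assume z: "z \<in> ball c (d/2)"
      have "norm z \<le> norm c + norm (z - c)" by (metis add.commute diff_add_cancel norm_triangle_ineq)
      also have "norm (z - c) < d/2" using z by (simp add: dist_norm norm_minus_commute)
      also have "norm c = d / 2" using d by (simp add: c_def norm_mult)
      finally have n1: "norm z < d" by simp
      have "\<bar>Im z - Im c\<bar> < d / 2" using z abs_Im_le_cmod[of "z - c"] by (simp add: dist_norm norm_minus_commute)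
      then have "-(d/2) < Im z - Im c" by (simp only: abs_less_iff) simp
      moreover have "Im c = d / 2" by (simp add: c_def)
      ultimately have "0 < Im z" by linarith
      with n1 show "z \<in> S \<inter> {z. 0 < Im z}" by (simp add: S_def)
    qed
    then show "ball c (d/2) \<subseteq> {z. 0 < Im z}" by auto
    show "c \<in> {z. 0 < Im z}" using d by (simp add: c_def)
    show "c islimpt ball c (d/2)" using d by (simp add: islimpt_ball)
    fix z assume "z \<in> ball c (d/2)"
    with sub have "z \<in> S" "0 < Im z" by auto
    then show "F z = 0" using H0[of z] by (simp add: H_def)
  qed
  define u where "u = (\<lambda>m::nat. complex_of_real t + \<i> * complex_of_real (1 / (real m + 1)))"
  have "u \<longlonglongrightarrow> complex_of_real t + \<i> * complex_of_real 0"
    unfolding u_def using LIMSEQ_inverse_real_of_nat by (intro tendsto_intros) (simp add: inverse_eq_divide add.commute)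
  then have ulim: "u \<longlonglongrightarrow> complex_of_real t" by simp
  have "(F \<circ> u) \<longlonglongrightarrow> F (complex_of_real t)"
    using contF[unfolded continuous_on_sequentially] ulim by (auto simp: u_def)
  moreover have "(F \<circ> u) = (\<lambda>_. 0)"
    by (rule ext) (simp add: u_def Fup add_pos_pos)
  ultimately have "F (complex_of_real t) = 0" using LIMSEQ_unique[OF _ tendsto_const] by metis
  then show ?thesis by (simp add: F_def)
qed


lemma mink_add: "mink (z + t *\<^sub>R e) k = mink z k + t * mink e k"
  by (simp add: mink_def algebra_simps)

lemma mink_cont: "continuous_on UNIV (\<lambda>k. mink x k)" unfolding mink_def by (intro continuous_intros)

lemma meas_cis: "(\<lambda>k. a * cis (mink w k)) \<in> borel_measurable borel"
  by (intro borel_measurable_continuous_onI continuous_intros mink_cont)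

lemma meas_lam: "(\<lambda>k. max 0 (mink w k)) \<in> borel_measurable borel"
  by (intro borel_measurable_continuous_onI continuous_intros mink_cont)

lemma meas_borelI: "sets M = sets borel \<Longrightarrow> f \<in> borel_measurable borel \<Longrightarrow> f \<in> borel_measurable M"
  using measurable_cong_sets[OF _ refl, of M borel] by blast

definition dir :: "4 \<Rightarrow> spacetime" where
  "dir j = (\<chi> i. if i = 0 then 1 else if i = j then 1/2 else 0)"

lemma four_eq_zero: "(4::4) = 0" by simp

lemma fc_bound:
  assumes "k \<in> future_cone" shows "\<bar>k $ j\<bar> \<le> k $ 0"
proof -
  have k0: "0 \<le> k $ 0" and q: "0 \<le> k$0 * k$0 - k$1 * k$1 - k$2 * k$2 - k$3 * k$3"
    using assms by (auto simp: future_cone_def mink_def)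
  have s: "0 \<le> k$1*k$1" "0 \<le> k$2*k$2" "0 \<le> k$3*k$3" by auto
  have "\<forall>j. (k $ j)*(k $ j) \<le> (k $ 0)*(k $ 0)"
    unfolding forall_4 four_eq_zero using q s by linarith
  then have "\<bar>k $ j\<bar>^2 \<le> (k $ 0)^2" by (simp add: power2_eq_square)
  then show ?thesis using k0 by (rule power2_le_imp_le)
qed

lemma dir_good: "k \<in> future_cone \<Longrightarrow> 0 \<le> mink (dir j) k"
proof -
  assume k: "k \<in> future_cone"
  have "j = 1 \<or> j = 2 \<or> j = 3 \<or> j = 0" using exhaust_4[of j] by auto
  then show ?thesis using fc_bound[OF k, of 1] fc_bound[OF k, of 2] fc_bound[OF k, of 3] k
    by (auto simp: mink_def dir_def future_cone_def)
qed

lemma dir_decomp: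
  "x = (x$0 - 2 * x$1 - 2 * x$2 - 2 * x$3) *\<^sub>R dir 0 + (2 * x$1) *\<^sub>R dir 1 + (2 * x$2) *\<^sub>R dir 2 + (2 * x$3) *\<^sub>R dir 3"
  unfolding vec_eq_iff forall_4 by (simp add: dir_def four_eq_zero)


lemma step_line:
  fixes M :: "nat \<Rightarrow> spacetime measure" and c :: "nat \<Rightarrow> complex" and G :: "spacetime \<Rightarrow> complex"
  assumes fin: "\<And>j. j < n \<Longrightarrow> finite_measure (M j)"
    and sets: "\<And>j. j < n \<Longrightarrow> sets (M j) = sets borel"
    and ae: "\<And>j. j < n \<Longrightarrow> AE k in M j. k \<in> future_cone"
    and G: "\<And>y. G y = (\<Sum>j<n. c j * (\<integral>k. cis (mink y k) \<partial>M j))"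
    and good: "\<And>k. k \<in> future_cone \<Longrightarrow> 0 \<le> mink e k"
    and Z: "\<And>y. y \<in> ball z \<rho> \<Longrightarrow> G y = 0"
    and w: "w \<in> ball (z + t *\<^sub>R e) \<rho>"
  shows "G w = 0"
proof -
  define w' where "w' = w - t *\<^sub>R e"
  have "z - w' = (z + t *\<^sub>R e) - w" by (simp add: w'_def)
  then have "dist z w' = dist (z + t *\<^sub>R e) w" by (simp only: dist_norm)
  then have dw: "dist z w' < \<rho>" using w by simp
  define d where "d = (\<rho> - dist z w') / (norm e + 1)"
  have ne: "0 < norm e + 1" by (simp add: add_nonneg_pos)
  have d: "0 < d" using dw ne unfolding d_def by (intro divide_pos_pos) auto
  define g where "g = (\<lambda>j k. (if j < n then c j else 0) * cis (mink w' k))"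
  define lam where "lam = (\<lambda>k. max 0 (mink e k))"
  define B where "B = (\<Sum>i<n. norm (c i))"
  have eq: "(\<Sum>j<n. \<integral>k. g j k * exp (\<i> * complex_of_real s * complex_of_real (lam k)) \<partial>M j) = G (w' + s *\<^sub>R e)" for s
    unfolding G
  proof (rule sum.cong[OF refl])
    fix j assume j: "j \<in> {..<n}"
    have "(\<integral>k. g j k * exp (\<i> * complex_of_real s * complex_of_real (lam k)) \<partial>M j)
        = (\<integral>k. c j * cis (mink (w' + s *\<^sub>R e) k) \<partial>M j)"
    proof (rule integral_cong_AE)
      show "(\<lambda>k. g j k * exp (\<i> * complex_of_real s * complex_of_real (lam k))) \<in> borel_measurable (M j)"
        unfolding g_def lam_def using sets[of j] j
        by (intro meas_int meas_borelI[OF _ meas_cis] meas_borelI[OF _ meas_lam]) auto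
      show "(\<lambda>k. c j * cis (mink (w' + s *\<^sub>R e) k)) \<in> borel_measurable (M j)"
        using sets[of j] j by (intro meas_borelI[OF _ meas_cis]) auto
      show "AE k in M j. g j k * exp (\<i> * complex_of_real s * complex_of_real (lam k)) = c j * cis (mink (w' + s *\<^sub>R e) k)"
      proof -
        have jn: "j < n" using j by simp
        show ?thesis using ae[OF jn]
        proof eventually_elim
          case (elim k)
          then have lk: "lam k = mink e k" using good[of k] by (simp add: lam_def)
          have "cis (mink (w' + s *\<^sub>R e) k) = cis (mink w' k) * exp (\<i> * complex_of_real s * complex_of_real (lam k))"
            unfolding mink_add lk cis_mult[symmetric] by (simp add: cis_conv_exp mult.assoc)
          then show ?case using jn by (simp add: g_def)
        qed
      qed
    qed
    also have "\<dots> = c j * (\<integral>k. cis (mink (w' + s *\<^sub>R e) k) \<partial>M j)" by simp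
    finally show "(\<integral>k. g j k * exp (\<i> * complex_of_real s * complex_of_real (lam k)) \<partial>M j)
        = c j * (\<integral>k. cis (mink (w' + s *\<^sub>R e) k) \<partial>M j)" .
  qed
  have "(\<Sum>j<n. \<integral>k. g j k * exp (\<i> * complex_of_real t * complex_of_real (lam k)) \<partial>M j) = 0"
  proof (rule half_line_zero[where B=B and d=d])
    show "\<And>j. j < n \<Longrightarrow> finite_measure (M j)" by (rule fin)
    show "\<And>j. j < n \<Longrightarrow> g j \<in> borel_measurable (M j)"
      unfolding g_def using sets by (intro meas_borelI[OF _ meas_cis]) auto
    show "\<And>j. j < n \<Longrightarrow> lam \<in> borel_measurable (M j)"
      unfolding lam_def using sets by (intro meas_borelI[OF _ meas_lam]) auto
    show "\<And>k. 0 \<le> lam k" by (simp add: lam_def)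
    show "0 < d" by (fact d)
    show "norm (g j k) \<le> B" for j k
    proof (cases "j < n")
      case True
      then have "norm (c j) \<le> B" unfolding B_def by (intro member_le_sum) auto
      then show ?thesis using True by (simp add: g_def norm_mult)
    next
      case False
      then show ?thesis by (simp add: g_def B_def sum_nonneg)
    qed
    fix s :: real assume s: "\<bar>s\<bar> < d"
    have "dist z (w' + s *\<^sub>R e) \<le> dist z w' + dist w' (w' + s *\<^sub>R e)" by (rule dist_triangle)
    also have "dist w' (w' + s *\<^sub>R e) = norm (s *\<^sub>R e)" by (simp add: dist_norm)
    also have "norm (s *\<^sub>R e) = \<bar>s\<bar> * norm e" by simp
    also have "\<bar>s\<bar> * norm e \<le> \<bar>s\<bar> * (norm e + 1)" by (simp add: mult_left_mono)
    also have "\<bar>s\<bar> * (norm e + 1) < d * (norm e + 1)"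
      using s ne by (intro mult_strict_right_mono) auto
    also have "d * (norm e + 1) = \<rho> - dist z w'" using ne by (simp add: d_def)
    finally have "w' + s *\<^sub>R e \<in> ball z \<rho>" by simp
    then show "(\<Sum>j<n. \<integral>k. g j k * exp (\<i> * complex_of_real s * complex_of_real (lam k)) \<partial>M j) = 0"
      using eq Z by simp
  qed
  then show ?thesis using eq[of t] by (simp add: w'_def)
qed

lemma fourier_zero:
  fixes M :: "nat \<Rightarrow> spacetime measure" and c :: "nat \<Rightarrow> complex" and G :: "spacetime \<Rightarrow> complex"
  assumes fin: "\<And>j. j < n \<Longrightarrow> finite_measure (M j)"
    and sets: "\<And>j. j < n \<Longrightarrow> sets (M j) = sets borel"
    and ae: "\<And>j. j < n \<Longrightarrow> AE k in M j. k \<in> future_cone"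
    and G: "\<And>y. G y = (\<Sum>j<n. c j * (\<integral>k. cis (mink y k) \<partial>M j))"
    and r: "0 < r"
    and Z: "\<And>y. y \<in> ball 0 r \<Longrightarrow> G y = 0"
  shows "G x = 0"
proof -
  have st: "\<And>y. y \<in> ball (z + t *\<^sub>R dir j) r \<Longrightarrow> G y = 0"
    if "\<And>y. y \<in> ball z r \<Longrightarrow> G y = 0" for z t j
    by (rule step_line[OF fin sets ae G dir_good that]) auto
  define t0 where "t0 = x$0 - 2 * x$1 - 2 * x$2 - 2 * x$3"
  have "\<And>y. y \<in> ball (0 + t0 *\<^sub>R dir 0) r \<Longrightarrow> G y = 0" by (rule st[OF Z])
  then have "\<And>y. y \<in> ball (0 + t0 *\<^sub>R dir 0 + (2 * x$1) *\<^sub>R dir 1) r \<Longrightarrow> G y = 0" by (rule st)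
  then have "\<And>y. y \<in> ball (0 + t0 *\<^sub>R dir 0 + (2 * x$1) *\<^sub>R dir 1 + (2 * x$2) *\<^sub>R dir 2) r \<Longrightarrow> G y = 0" by (rule st)
  then have "\<And>y. y \<in> ball (0 + t0 *\<^sub>R dir 0 + (2 * x$1) *\<^sub>R dir 1 + (2 * x$2) *\<^sub>R dir 2 + (2 * x$3) *\<^sub>R dir 3) r \<Longrightarrow> G y = 0" by (rule st)
  moreover have "0 + t0 *\<^sub>R dir 0 + (2 * x$1) *\<^sub>R dir 1 + (2 * x$2) *\<^sub>R dir 2 + (2 * x$3) *\<^sub>R dir 3 = x"
    unfolding t0_def add_0_left by (rule dir_decomp[symmetric])
  ultimately show ?thesis using r by simp
qed


definition lc :: "complex \<Rightarrow> ('i \<Rightarrow> complex) \<Rightarrow> complex \<Rightarrow> ('i \<Rightarrow> complex) \<Rightarrow> ('i \<Rightarrow> complex)" where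
  "lc a \<phi> b \<psi> = (\<lambda>i. a * \<phi> i + b * \<psi> i)"

lemma l2_prod_abs_summable:
  fixes \<phi> \<psi> :: "'i::countable \<Rightarrow> complex"
  assumes "\<phi> \<in> l2" "\<psi> \<in> l2"
  shows "Infinite_Sum.abs_summable_on (\<lambda>i. cnj (\<phi> i) * \<psi> i) UNIV"
proof (rule Infinite_Sum.abs_summable_on_comparison_test')
  show "(\<lambda>i. (cmod (\<phi> i))\<^sup>2 + (cmod (\<psi> i))\<^sup>2) summable_on UNIV"
    using assms by (intro summable_on_add) (auto simp: l2_def)
  fix i
  have "2 * (cmod (\<phi> i) * cmod (\<psi> i)) \<le> (cmod (\<phi> i))\<^sup>2 + (cmod (\<psi> i))\<^sup>2"
    using sum_squares_bound[of "cmod (\<phi> i)" "cmod (\<psi> i)"] by (simp add: power2_eq_square algebra_simps)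
  moreover have "0 \<le> cmod (\<phi> i) * cmod (\<psi> i)" by simp
  ultimately show "norm (cnj (\<phi> i) * \<psi> i) \<le> (cmod (\<phi> i))\<^sup>2 + (cmod (\<psi> i))\<^sup>2"
    unfolding norm_mult complex_mod_cnj by linarith
qed

lemma l2_prod_summable:
  fixes \<phi> \<psi> :: "'i::countable \<Rightarrow> complex"
  assumes "\<phi> \<in> l2" "\<psi> \<in> l2"
  shows "(\<lambda>i. cnj (\<phi> i) * \<psi> i) summable_on UNIV"
  using l2_prod_abs_summable[OF assms] by (rule abs_summable_summable)

lemma l2_lc:
  fixes \<phi> \<psi> :: "'i::countable \<Rightarrow> complex"
  assumes "\<phi> \<in> l2" "\<psi> \<in> l2"
  shows "lc a \<phi> b \<psi> \<in> l2"
proof -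
  have s: "(\<lambda>i. 2 * (cmod a)\<^sup>2 * (cmod (\<phi> i))\<^sup>2 + 2 * (cmod b)\<^sup>2 * (cmod (\<psi> i))\<^sup>2) summable_on UNIV"
    using assms by (intro summable_on_add summable_on_cmult_right) (auto simp: l2_def)
  have "(\<lambda>i. (cmod (lc a \<phi> b \<psi> i))\<^sup>2) summable_on UNIV"
  proof (rule summable_on_comparison_test[OF s])
    fix i
    have "cmod (lc a \<phi> b \<psi> i) \<le> cmod a * cmod (\<phi> i) + cmod b * cmod (\<psi> i)"
      unfolding lc_def by (metis norm_mult norm_triangle_ineq)
    then have "(cmod (lc a \<phi> b \<psi> i))\<^sup>2 \<le> (cmod a * cmod (\<phi> i) + cmod b * cmod (\<psi> i))\<^sup>2"
      by (intro power_mono) auto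
    also have "\<dots> \<le> 2 * (cmod a * cmod (\<phi> i))\<^sup>2 + 2 * (cmod b * cmod (\<psi> i))\<^sup>2"
    proof -
      have "0 \<le> (cmod a * cmod (\<phi> i) - cmod b * cmod (\<psi> i))\<^sup>2" by simp
      then show ?thesis unfolding power2_eq_square by (simp add: algebra_simps)
    qed
    finally show "(cmod (lc a \<phi> b \<psi> i))\<^sup>2 \<le> 2 * (cmod a)\<^sup>2 * (cmod (\<phi> i))\<^sup>2 + 2 * (cmod b)\<^sup>2 * (cmod (\<psi> i))\<^sup>2"
      by (simp add: power_mult_distrib)
  qed auto
  then show ?thesis by (simp add: l2_def)
qed

lemma inner_lc_right:
  fixes \<phi> \<psi> \<eta> :: "'i::countable \<Rightarrow> complex"
  assumes "\<phi> \<in> l2" "\<psi> \<in> l2" "\<eta> \<in> l2"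
  shows "l2_inner \<phi> (lc a \<psi> b \<eta>) = a * l2_inner \<phi> \<psi> + b * l2_inner \<phi> \<eta>"
proof -
  have "l2_inner \<phi> (lc a \<psi> b \<eta>) = (\<Sum>\<^sub>\<infinity>i. a * (cnj (\<phi> i) * \<psi> i) + b * (cnj (\<phi> i) * \<eta> i))"
    unfolding l2_inner_def lc_def by (simp add: algebra_simps)
  also have "\<dots> = (\<Sum>\<^sub>\<infinity>i. a * (cnj (\<phi> i) * \<psi> i)) + (\<Sum>\<^sub>\<infinity>i. b * (cnj (\<phi> i) * \<eta> i))"
    using assms by (intro infsum_add summable_on_cmult_right l2_prod_summable)
  also have "\<dots> = a * l2_inner \<phi> \<psi> + b * l2_inner \<phi> \<eta>"
    unfolding l2_inner_def by (simp add: infsum_cmult_right')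
  finally show ?thesis .
qed

lemma inner_cnj_sym:
  fixes \<phi> \<psi> :: "'i::countable \<Rightarrow> complex"
  shows "l2_inner \<phi> \<psi> = cnj (l2_inner \<psi> \<phi>)"
  unfolding l2_inner_def infsum_cnj[symmetric] by (simp add: mult.commute)

lemma inner_lc_left:
  fixes \<phi> \<psi> \<eta> :: "'i::countable \<Rightarrow> complex"
  assumes "\<phi> \<in> l2" "\<psi> \<in> l2" "\<eta> \<in> l2"
  shows "l2_inner (lc a \<psi> b \<eta>) \<phi> = cnj a * l2_inner \<psi> \<phi> + cnj b * l2_inner \<eta> \<phi>"
proof -
  have "l2_inner (lc a \<psi> b \<eta>) \<phi> = cnj (l2_inner \<phi> (lc a \<psi> b \<eta>))" by (rule inner_cnj_sym)
  also have "\<dots> = cnj (a * l2_inner \<phi> \<psi> + b * l2_inner \<phi> \<eta>)" using inner_lc_right[OF assms] by simp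
  also have "\<dots> = cnj a * cnj (l2_inner \<phi> \<psi>) + cnj b * cnj (l2_inner \<phi> \<eta>)" by simp
  also have "cnj (l2_inner \<phi> \<psi>) = l2_inner \<psi> \<phi>" by (rule inner_cnj_sym[symmetric])
  also have "cnj (l2_inner \<phi> \<eta>) = l2_inner \<eta> \<phi>" by (rule inner_cnj_sym[symmetric])
  finally show ?thesis .
qed

lemma inner_self:
  fixes \<psi> :: "'i::countable \<Rightarrow> complex"
  assumes "\<psi> \<in> l2"
  shows "l2_inner \<psi> \<psi> = complex_of_real (\<Sum>\<^sub>\<infinity>i. (cmod (\<psi> i))\<^sup>2)"
proof -
  have s: "(\<lambda>i. (cmod (\<psi> i))\<^sup>2) summable_on UNIV" using assms by (simp add: l2_def)
  have "l2_inner \<psi> \<psi> = (\<Sum>\<^sub>\<infinity>i. complex_of_real ((cmod (\<psi> i))\<^sup>2))"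
  proof -
    have "\<And>i. cnj (\<psi> i) * \<psi> i = complex_of_real ((cmod (\<psi> i))\<^sup>2)"
      by (metis complex_norm_square mult.commute of_real_power)
    then show ?thesis unfolding l2_inner_def by simp
  qed
  also have "\<dots> = complex_of_real (\<Sum>\<^sub>\<infinity>i. (cmod (\<psi> i))\<^sup>2)"
  proof -
    have s2: "(\<lambda>i. complex_of_real ((cmod (\<psi> i))\<^sup>2)) summable_on UNIV"
      by (rule summable_on_bounded_linear[OF bounded_linear_of_real s])
    show ?thesis
      by (rule infsum_bounded_linear_strong[OF _ bounded_linear_of_real]) (use s s2 in blast)
  qed
  finally show ?thesis .
qed

lemma inner_self_nonneg:
  fixes \<psi> :: "'i::countable \<Rightarrow> complex"
  assumes "\<psi> \<in> l2" shows "0 \<le> l2_inner \<psi> \<psi>"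
  using inner_self[OF assms] by (simp add: less_eq_complex_def infsum_nonneg)

lemma inner_self_pos:
  fixes \<psi> :: "'i::countable \<Rightarrow> complex"
  assumes "\<psi> \<in> l2" "\<psi> \<noteq> (\<lambda>_. 0)" shows "0 < Re (l2_inner \<psi> \<psi>)"
proof -
  obtain j where j: "\<psi> j \<noteq> 0" using assms(2) by auto
  have s: "(\<lambda>i. (cmod (\<psi> i))\<^sup>2) summable_on UNIV" using assms by (simp add: l2_def)
  have "sum (\<lambda>i. (cmod (\<psi> i))\<^sup>2) {j} \<le> (\<Sum>\<^sub>\<infinity>i. (cmod (\<psi> i))\<^sup>2)"
    by (rule finite_sum_le_infsum[OF s]) auto
  then have le: "(cmod (\<psi> j))\<^sup>2 \<le> (\<Sum>\<^sub>\<infinity>i. (cmod (\<psi> i))\<^sup>2)" by simp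
  have "0 < (cmod (\<psi> j))\<^sup>2" using j by simp
  with le have "0 < (\<Sum>\<^sub>\<infinity>i. (cmod (\<psi> i))\<^sup>2)" by linarith
  then show ?thesis using inner_self[OF assms(1)] by simp
qed


lemma bop_l2: "bounded_op A \<Longrightarrow> \<psi> \<in> l2 \<Longrightarrow> A \<psi> \<in> l2"
  by (simp add: bounded_op_def)

lemma bop_lc: "bounded_op A \<Longrightarrow> \<phi> \<in> l2 \<Longrightarrow> \<psi> \<in> l2 \<Longrightarrow> A (lc a \<phi> b \<psi>) = lc a (A \<phi>) b (A \<psi>)"
  unfolding bounded_op_def lc_def by blast

lemma quad_expand:
  fixes A :: "'i::countable op"
  assumes A: "bounded_op A" and l: "\<phi> \<in> l2" "\<eta> \<in> l2"
  shows "l2_inner (lc 1 \<phi> c \<eta>) (A (lc 1 \<phi> c \<eta>)) =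
     l2_inner \<phi> (A \<phi>) + c * l2_inner \<phi> (A \<eta>) + cnj c * l2_inner \<eta> (A \<phi>) + (cnj c * c) * l2_inner \<eta> (A \<eta>)"
proof -
  have Al: "A \<phi> \<in> l2" "A \<eta> \<in> l2" using A l by (auto intro: bop_l2)
  have lcl: "lc 1 (A \<phi>) c (A \<eta>) \<in> l2" using Al by (rule l2_lc)
  have "l2_inner (lc 1 \<phi> c \<eta>) (A (lc 1 \<phi> c \<eta>)) = l2_inner (lc 1 \<phi> c \<eta>) (lc 1 (A \<phi>) c (A \<eta>))"
    using bop_lc[OF A l] by simp
  also have "\<dots> = l2_inner \<phi> (lc 1 (A \<phi>) c (A \<eta>)) + cnj c * l2_inner \<eta> (lc 1 (A \<phi>) c (A \<eta>))"
    using inner_lc_left[OF lcl l, of 1 c] by simp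
  also have "\<dots> = (l2_inner \<phi> (A \<phi>) + c * l2_inner \<phi> (A \<eta>)) + cnj c * (l2_inner \<eta> (A \<phi>) + c * l2_inner \<eta> (A \<eta>))"
    using inner_lc_right[OF l(1) Al, of 1 c] inner_lc_right[OF l(2) Al, of 1 c] by simp
  also have "\<dots> = l2_inner \<phi> (A \<phi>) + c * l2_inner \<phi> (A \<eta>) + cnj c * l2_inner \<eta> (A \<phi>) + (cnj c * c) * l2_inner \<eta> (A \<eta>)"
    by (simp add: algebra_simps)
  finally show ?thesis .
qed

lemma adj_from_quad:
  fixes A B :: "'i::countable op"
  assumes A: "bounded_op A" and B: "bounded_op B"
    and h: "\<And>v. v \<in> l2 \<Longrightarrow> l2_inner v (A v) = cnj (l2_inner v (B v))"
    and l: "\<phi> \<in> l2" "\<eta> \<in> l2"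
  shows "l2_inner \<phi> (A \<eta>) = cnj (l2_inner \<eta> (B \<phi>))"
proof -
  define a1 where "a1 = l2_inner \<phi> (A \<eta>)"
  define a2 where "a2 = l2_inner \<eta> (A \<phi>)"
  define b1 where "b1 = l2_inner \<phi> (B \<eta>)"
  define b2 where "b2 = l2_inner \<eta> (B \<phi>)"
  define p where "p = l2_inner \<phi> (A \<phi>)"
  define q where "q = l2_inner \<eta> (A \<eta>)"
  define p' where "p' = l2_inner \<phi> (B \<phi>)"
  define q' where "q' = l2_inner \<eta> (B \<eta>)"
  have hp: "p = cnj p'" using h[OF l(1)] by (simp add: p_def p'_def)
  have hq: "q = cnj q'" using h[OF l(2)] by (simp add: q_def q'_def)
  have "p + a1 + a2 + q = l2_inner (lc 1 \<phi> 1 \<eta>) (A (lc 1 \<phi> 1 \<eta>))"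
    unfolding quad_expand[OF A l, of 1] by (simp only: a1_def a2_def p_def q_def complex_cnj_one mult_1_left)
  also have "\<dots> = cnj (l2_inner (lc 1 \<phi> 1 \<eta>) (B (lc 1 \<phi> 1 \<eta>)))" by (rule h[OF l2_lc[OF l]])
  also have "l2_inner (lc 1 \<phi> 1 \<eta>) (B (lc 1 \<phi> 1 \<eta>)) = p' + b1 + b2 + q'"
    unfolding quad_expand[OF B l, of 1] by (simp only: b1_def b2_def p'_def q'_def complex_cnj_one mult_1_left)
  finally have h1: "p + a1 + a2 + q = cnj (p' + b1 + b2 + q')" .
  have ii: "cnj \<i> * \<i> = 1" by simp
  have "p + \<i> * a1 - \<i> * a2 + q = l2_inner (lc 1 \<phi> \<i> \<eta>) (A (lc 1 \<phi> \<i> \<eta>))"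
    unfolding quad_expand[OF A l, of \<i>] ii complex_cnj_i mult_1_left by (simp only: a1_def a2_def p_def q_def) (simp add: algebra_simps)
  also have "\<dots> = cnj (l2_inner (lc 1 \<phi> \<i> \<eta>) (B (lc 1 \<phi> \<i> \<eta>)))" by (rule h[OF l2_lc[OF l]])
  also have "l2_inner (lc 1 \<phi> \<i> \<eta>) (B (lc 1 \<phi> \<i> \<eta>)) = p' + \<i> * b1 - \<i> * b2 + q'"
    unfolding quad_expand[OF B l, of \<i>] ii complex_cnj_i mult_1_left by (simp only: b1_def b2_def p'_def q'_def) (simp add: algebra_simps)
  finally have h2: "p + \<i> * a1 - \<i> * a2 + q = cnj (p' + \<i> * b1 - \<i> * b2 + q')" .
  have e1: "a1 + a2 = cnj b1 + cnj b2" using h1 hp hq by simp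
  have e2: "\<i> * a1 - \<i> * a2 = - \<i> * cnj b1 + \<i> * cnj b2" using h2 hp hq by simp
  then have "-\<i> * (\<i> * a1 - \<i> * a2) = -\<i> * (- \<i> * cnj b1 + \<i> * cnj b2)" by simp
  then have e3: "a1 - a2 = - cnj b1 + cnj b2" by (simp add: algebra_simps)
  have "(a1 + a2) + (a1 - a2) = (cnj b1 + cnj b2) + (- cnj b1 + cnj b2)" using e1 e3 by simp
  then have "2 * a1 = 2 * cnj b2" by (simp add: algebra_simps)
  then show ?thesis by (simp add: a1_def b2_def)
qed

lemma real_cnj: "0 \<le> (z::complex) \<Longrightarrow> z = cnj z"
  by (simp add: less_eq_complex_def complex_eq_iff)

lemma herm:
  fixes A :: "'i::countable op"
  assumes "positive_op A" "\<phi> \<in> l2" "\<eta> \<in> l2"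
  shows "l2_inner \<phi> (A \<eta>) = cnj (l2_inner \<eta> (A \<phi>))"
  using assms by (rule_tac adj_from_quad) (auto simp: positive_op_def intro: real_cnj)

lemma pos_kernel:
  fixes A :: "'i::countable op"
  assumes A: "positive_op A" and w: "w \<in> l2" and z: "l2_inner w (A w) = 0" and \<phi>: "\<phi> \<in> l2"
  shows "l2_inner \<phi> (A w) = 0"
proof (rule ccontr)
  define a where "a = l2_inner \<phi> (A w)"
  assume "l2_inner \<phi> (A w) \<noteq> 0"
  then have a0: "a \<noteq> 0" by (simp add: a_def)
  have bA: "bounded_op A" using A by (simp add: positive_op_def)
  define Q where "Q = Re (l2_inner \<phi> (A \<phi>))"
  have Q0: "0 \<le> Q" using A \<phi> by (auto simp: positive_op_def Q_def less_eq_complex_def)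
  define t where "t = 1 / (Q + 1)"
  have t: "0 < t" using Q0 by (simp add: t_def)
  have tQ: "t * Q < 1" using Q0 by (simp add: t_def field_simps)
  define N where "N = (cmod a)^2"
  have N: "0 < N" using a0 by (simp add: N_def)
  have acnj: "a * cnj a = complex_of_real N" by (simp add: N_def complex_norm_square[symmetric])
  define s where "s = - (complex_of_real t * a)"
  have wa: "l2_inner w (A \<phi>) = cnj a" using herm[OF A w \<phi>] by (simp add: a_def)
  have "l2_inner (lc 1 w s \<phi>) (A (lc 1 w s \<phi>)) =
     l2_inner w (A w) + s * l2_inner w (A \<phi>) + cnj s * l2_inner \<phi> (A w) + (cnj s * s) * l2_inner \<phi> (A \<phi>)"
    by (rule quad_expand[OF bA w \<phi>])
  also have "\<dots> = s * cnj a + cnj s * a + (cnj s * s) * l2_inner \<phi> (A \<phi>)"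
    using z wa by (simp add: a_def)
  finally have eq: "l2_inner (lc 1 w s \<phi>) (A (lc 1 w s \<phi>)) = s * cnj a + cnj s * a + (cnj s * s) * l2_inner \<phi> (A \<phi>)" .
  have "s * cnj a = - (complex_of_real t * (a * cnj a))" by (simp add: s_def mult.assoc)
  then have e1: "s * cnj a = - complex_of_real (t * N)" unfolding acnj by simp
  have "cnj s * a = - (complex_of_real t * (a * cnj a))" by (simp add: s_def mult.commute mult.left_commute)
  then have e2: "cnj s * a = - complex_of_real (t * N)" unfolding acnj by simp
  have "cnj s * s = complex_of_real t * complex_of_real t * (a * cnj a)" by (simp add: s_def mult.commute mult.left_commute)
  then have e3: "cnj s * s = complex_of_real (t * t * N)" unfolding acnj by simp
  note e1 e2 e3
  have "Re (l2_inner (lc 1 w s \<phi>) (A (lc 1 w s \<phi>))) = - 2 * t * N + t * t * N * Q"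
    unfolding eq e1 e2 e3 by (simp add: Q_def)
  moreover have "0 \<le> Re (l2_inner (lc 1 w s \<phi>) (A (lc 1 w s \<phi>)))"
    using A l2_lc[OF w \<phi>] by (auto simp: positive_op_def less_eq_complex_def)
  ultimately have "2 * t * N \<le> t * N * (t * Q)" by (simp add: algebra_simps)
  also have "\<dots> < t * N * 1" using tQ t N by (intro mult_strict_left_mono) auto
  finally show False using t N by simp
qed


lemma wca_empty:
  fixes T :: "spacetime set \<Rightarrow> 'i::countable op"
  assumes wca: "weakly_countably_additive T" and l: "\<phi> \<in> l2" "\<psi> \<in> l2"
  shows "l2_inner \<phi> (T {} \<psi>) = 0"
proof -
  have "(\<lambda>n. l2_inner \<phi> (T ((\<lambda>n::nat. {}) n) \<psi>)) sums l2_inner \<phi> (T (\<Union>n. (\<lambda>n::nat. {}) n) \<psi>)"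
    using wca l unfolding weakly_countably_additive_def by (auto simp: disjoint_family_on_def)
  then have "(\<lambda>n::nat. l2_inner \<phi> (T {} \<psi>)) sums l2_inner \<phi> (T {} \<psi>)" by simp
  then have "(\<lambda>n::nat. l2_inner \<phi> (T {} \<psi>)) \<longlonglongrightarrow> 0" by (intro summable_LIMSEQ_zero sums_summable)
  then show ?thesis using LIMSEQ_unique[OF tendsto_const] by metis
qed

lemma sa_borel: "sigma_algebra UNIV (sets (borel :: spacetime measure))"
  using sets.sigma_algebra_axioms[of "borel :: spacetime measure"] by simp

definition qmeas :: "(spacetime set \<Rightarrow> 'i::countable op) \<Rightarrow> ('i \<Rightarrow> complex) \<Rightarrow> spacetime measure" where
  "qmeas T \<psi> = measure_of UNIV (sets borel) (\<lambda>B. ennreal (Re (l2_inner \<psi> (T B \<psi>))))"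

lemma qmeas_sets: "sets (qmeas T \<psi>) = sets borel"
  unfolding qmeas_def by (rule sigma_algebra.sets_measure_of_eq[OF sa_borel])

lemma qmeas_space: "space (qmeas T \<psi>) = UNIV"
  unfolding qmeas_def by (rule space_measure_of_conv)

lemma qmeas_emeasure:
  fixes T :: "spacetime set \<Rightarrow> 'i::countable op"
  assumes wca: "weakly_countably_additive T" and \<psi>: "\<psi> \<in> l2"
    and pos: "\<And>B. B \<in> sets borel \<Longrightarrow> 0 \<le> l2_inner \<psi> (T B \<psi>)"
    and B: "B \<in> sets borel"
  shows "emeasure (qmeas T \<psi>) B = ennreal (Re (l2_inner \<psi> (T B \<psi>)))"
  unfolding qmeas_def
proof (rule emeasure_measure_of_sigma[OF sa_borel _ _ B])
  show "positive (sets borel) (\<lambda>B. ennreal (Re (l2_inner \<psi> (T B \<psi>))))"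
    unfolding positive_def using wca_empty[OF wca \<psi> \<psi>] by simp
  show "countably_additive (sets borel) (\<lambda>B. ennreal (Re (l2_inner \<psi> (T B \<psi>))))"
    unfolding countably_additive_def
  proof (intro allI impI)
    fix A :: "nat \<Rightarrow> spacetime set"
    assume A: "range A \<subseteq> sets borel" and dj: "disjoint_family A" and "\<Union> (range A) \<in> sets borel"
    have "(\<lambda>n. l2_inner \<psi> (T (A n) \<psi>)) sums l2_inner \<psi> (T (\<Union>n. A n) \<psi>)"
      using wca \<psi> A dj unfolding weakly_countably_additive_def by auto
    then have s: "(\<lambda>n. Re (l2_inner \<psi> (T (A n) \<psi>))) sums Re (l2_inner \<psi> (T (\<Union>n. A n) \<psi>))"
      by (rule sums_Re)
    have nn: "\<And>n. 0 \<le> Re (l2_inner \<psi> (T (A n) \<psi>))"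
      using pos A by (auto simp: less_eq_complex_def)
    show "(\<Sum>n. ennreal (Re (l2_inner \<psi> (T (A n) \<psi>)))) = ennreal (Re (l2_inner \<psi> (T (\<Union> (range A)) \<psi>)))"
      using suminf_ennreal2[OF nn sums_summable[OF s]] sums_unique[OF s] by simp
  qed
qed

lemma qmeas_finite:
  fixes T :: "spacetime set \<Rightarrow> 'i::countable op"
  assumes wca: "weakly_countably_additive T" and \<psi>: "\<psi> \<in> l2"
    and pos: "\<And>B. B \<in> sets borel \<Longrightarrow> 0 \<le> l2_inner \<psi> (T B \<psi>)"
  shows "finite_measure (qmeas T \<psi>)"
  by (rule finite_measureI) (simp add: qmeas_space qmeas_emeasure[OF wca \<psi> pos])

lemma PV_pos:
  fixes E :: "spacetime set \<Rightarrow> 'i::countable op"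
  assumes E: "PV_measure E" and B: "B \<in> sets borel" and \<psi>: "\<psi> \<in> l2"
  shows "0 \<le> l2_inner \<psi> (E B \<psi>)"
proof -
  have b: "bounded_op (E B)" and idem: "E B (E B \<psi>) = E B \<psi>"
    and sa: "\<And>\<phi> \<eta>. \<phi> \<in> l2 \<Longrightarrow> \<eta> \<in> l2 \<Longrightarrow> l2_inner \<phi> (E B \<eta>) = l2_inner (E B \<phi>) \<eta>"
    using E B \<psi> unfolding PV_measure_def by auto
  have El: "E B \<psi> \<in> l2" using b \<psi> by (rule bop_l2)
  have "l2_inner \<psi> (E B \<psi>) = l2_inner \<psi> (E B (E B \<psi>))" using idem by simp
  also have "\<dots> = l2_inner (E B \<psi>) (E B \<psi>)" using sa[OF \<psi> El] .
  finally show ?thesis using inner_self_nonneg[OF El] by simp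
qed

lemma spectral_is_qmeas: "spectral_measure E \<psi> = qmeas E \<psi>"
  by (simp add: spectral_measure_def qmeas_def)

lemma future_cone_borel: "future_cone \<in> sets borel"
proof -
  have "closed future_cone" unfolding future_cone_def mink_def
    by (intro closed_Collect_conj closed_Collect_le continuous_intros)
  then show ?thesis by (rule borel_closed)
qed

lemma spectral_props:
  fixes E :: "spacetime set \<Rightarrow> 'i::countable op"
  assumes P: "four_momentum_translations E U" and v: "v \<in> l2"
  shows "sets (spectral_measure E v) = sets borel" "finite_measure (spectral_measure E v)"
    "AE k in spectral_measure E v. k \<in> future_cone"
proof -
  have E: "PV_measure E" using P by (simp add: four_momentum_translations_def)
  have wca: "weakly_countably_additive E" using E by (simp add: PV_measure_def)
  have pos: "\<And>B. B \<in> sets borel \<Longrightarrow> 0 \<le> l2_inner v (E B v)" using PV_pos[OF E _ v] by blast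
  show "sets (spectral_measure E v) = sets borel" by (simp add: spectral_is_qmeas qmeas_sets)
  show fin: "finite_measure (spectral_measure E v)"
    unfolding spectral_is_qmeas by (rule qmeas_finite[OF wca v pos])
  let ?M = "qmeas E v"
  have fc: "E future_cone v = v" using P v by (simp add: four_momentum_translations_def)
  have un: "E UNIV v = v" using E v by (simp add: PV_measure_def)
  have "emeasure ?M future_cone + emeasure ?M (- future_cone) = emeasure ?M (future_cone \<union> - future_cone)"
    using future_cone_borel by (intro plus_emeasure) (auto simp: qmeas_sets)
  also have "future_cone \<union> - future_cone = UNIV" by auto
  also have "emeasure ?M UNIV = emeasure ?M future_cone"
    using qmeas_emeasure[OF wca v pos, of UNIV] qmeas_emeasure[OF wca v pos future_cone_borel] fc un by simp
  finally have "emeasure ?M future_cone + emeasure ?M (- future_cone) = emeasure ?M future_cone + 0" by simp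
  moreover have "emeasure ?M future_cone \<noteq> \<infinity>"
    using qmeas_emeasure[OF wca v pos future_cone_borel] by simp
  ultimately have "emeasure ?M (- future_cone) = 0" using ennreal_add_left_cancel by blast
  then have "- future_cone \<in> null_sets ?M"
    using future_cone_borel by (auto simp: null_sets_def qmeas_sets)
  then show "AE k in spectral_measure E v. k \<in> future_cone"
    unfolding spectral_is_qmeas by (rule AE_I') auto
qed


definition dd :: "nat \<Rightarrow> complex" where "dd j = [1, -1, \<i>, -\<i>] ! j"
definition cc :: "nat \<Rightarrow> complex" where "cc j = [1/4, -1/4, -\<i>/4, \<i>/4] ! j"

lemma sum4: "(\<Sum>j<(4::nat). f j) = f 0 + f 1 + f 2 + (f 3 :: complex)"
  by (simp add: eval_nat_numeral)

lemma polarization: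
  fixes A :: "'i::countable op"
  assumes A: "bounded_op A" and l: "\<phi> \<in> l2" "\<eta> \<in> l2"
  shows "l2_inner \<phi> (A \<eta>) = (\<Sum>j<4. cc j * l2_inner (lc 1 \<phi> (dd j) \<eta>) (A (lc 1 \<phi> (dd j) \<eta>)))"
proof -
  define p where "p = l2_inner \<phi> (A \<phi>)"
  define a1 where "a1 = l2_inner \<phi> (A \<eta>)"
  define a2 where "a2 = l2_inner \<eta> (A \<phi>)"
  define q where "q = l2_inner \<eta> (A \<eta>)"
  have Q: "l2_inner (lc 1 \<phi> c \<eta>) (A (lc 1 \<phi> c \<eta>)) = p + c * a1 + cnj c * a2 + (cnj c * c) * q" for c
    unfolding p_def a1_def a2_def q_def by (rule quad_expand[OF A l])
  have "(\<Sum>j<4. cc j * l2_inner (lc 1 \<phi> (dd j) \<eta>) (A (lc 1 \<phi> (dd j) \<eta>)))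
     = 1/4 * (p + a1 + a2 + q) - 1/4 * (p - a1 - a2 + q) - \<i>/4 * (p + \<i> * a1 - \<i> * a2 + q) + \<i>/4 * (p - \<i> * a1 + \<i> * a2 + q)"
  proof -
    have q0: "l2_inner (lc 1 \<phi> (dd 0) \<eta>) (A (lc 1 \<phi> (dd 0) \<eta>)) = p + a1 + a2 + q"
      unfolding Q by (simp add: dd_def)
    have q1: "l2_inner (lc 1 \<phi> (dd 1) \<eta>) (A (lc 1 \<phi> (dd 1) \<eta>)) = p - a1 - a2 + q"
      unfolding Q by (simp add: dd_def)
    have q2: "l2_inner (lc 1 \<phi> (dd 2) \<eta>) (A (lc 1 \<phi> (dd 2) \<eta>)) = p + \<i> * a1 - \<i> * a2 + q"
      unfolding Q by (simp add: dd_def)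
    have q3: "l2_inner (lc 1 \<phi> (dd 3) \<eta>) (A (lc 1 \<phi> (dd 3) \<eta>)) = p - \<i> * a1 + \<i> * a2 + q"
      unfolding Q by (simp add: dd_def)
    show ?thesis unfolding sum4 q0 q1 q2 q3 by (simp add: cc_def)
  qed
  also have "\<dots> = a1" by (simp add: field_simps)
  finally show ?thesis by (simp add: a1_def)
qed

lemma U_quad:
  assumes P: "four_momentum_translations E U" and v: "v \<in> l2"
  shows "l2_inner v (U x v) = (\<integral>k. cis (mink x k) \<partial>spectral_measure E v)"
  using P v by (simp add: four_momentum_translations_def)

lemma U_bop: "four_momentum_translations E U \<Longrightarrow> bounded_op (U x)"
  by (simp add: four_momentum_translations_def)

lemma U_adj:
  fixes E :: "spacetime set \<Rightarrow> 'i::countable op"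
  assumes P: "four_momentum_translations E U" and l: "\<phi> \<in> l2" "\<eta> \<in> l2"
  shows "l2_inner \<phi> (U x \<eta>) = cnj (l2_inner \<eta> (U (-x) \<phi>))"
proof (rule adj_from_quad[OF U_bop[OF P] U_bop[OF P] _ l])
  fix v :: "'i \<Rightarrow> complex" assume v: "v \<in> l2"
  have "l2_inner v (U (-x) v) = (\<integral>k. cnj (cis (mink x k)) \<partial>spectral_measure E v)"
  proof -
    have "\<And>k. mink (-x) k = - mink x k" by (simp add: mink_def)
    then show ?thesis unfolding U_quad[OF P v] by (simp add: cis_cnj)
  qed
  also have "\<dots> = cnj (l2_inner v (U x v))"
    unfolding U_quad[OF P v] by (rule Bochner_Integration.integral_cnj)
  finally show "l2_inner v (U x v) = cnj (l2_inner v (U (- x) v))" by simp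
qed

lemma G_repr:
  fixes E :: "spacetime set \<Rightarrow> 'i::countable op"
  assumes P: "four_momentum_translations E U" and l: "\<eta> \<in> l2" "\<psi> \<in> l2"
  shows "l2_inner \<eta> (U y \<psi>) = (\<Sum>j<4. cc j * (\<integral>k. cis (mink y k) \<partial>spectral_measure E (lc 1 \<eta> (dd j) \<psi>)))"
  unfolding polarization[OF U_bop[OF P] l] using U_quad[OF P l2_lc[OF l]] by simp


lemma ball_translate:
  fixes x c :: "'a::real_normed_vector"
  shows "(\<lambda>y. y + x) ` ball c \<rho> = ball (c + x) \<rho>"
proof (intro set_eqI iffI)
  fix z assume "z \<in> (\<lambda>y. y + x) ` ball c \<rho>"
  then obtain y where "y \<in> ball c \<rho>" "z = y + x" by auto
  moreover have "(c + x) - (y + x) = c - y" by (simp add: algebra_simps)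
  ultimately show "z \<in> ball (c + x) \<rho>" by (simp add: dist_norm)
next
  fix z assume z: "z \<in> ball (c + x) \<rho>"
  have "z - x \<in> ball c \<rho>" using z by (simp add: dist_norm algebra_simps)
  moreover have "z = (z - x) + x" by simp
  ultimately show "z \<in> (\<lambda>y. y + x) ` ball c \<rho>" by blast
qed

theorem proposition1:
  fixes E :: "spacetime set \<Rightarrow> 'i::countable op"
    and U :: "spacetime \<Rightarrow> 'i op"
    and \<tau> :: "spacetime set \<Rightarrow> 'i op"
  assumes P: "four_momentum_translations E U"
    and pov: "POV_measure \<tau>"
    and norm: "normalized \<tau>"
    and cov: "\<forall>I\<in>sets borel. \<forall>x. \<forall>\<psi>\<in>l2.
               U (- x) (\<tau> ((\<lambda>y. y + x) ` I) (U x \<psi>)) = \<tau> I \<psi>"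
  shows "\<forall>\<psi>\<in>l2. \<psi> \<noteq> (\<lambda>_. 0) \<longrightarrow> (\<forall>I. open I \<and> I \<noteq> {} \<longrightarrow> l2_inner \<psi> (\<tau> I \<psi>) > 0)"
proof (intro ballI impI allI, elim conjE)
  fix \<psi> :: "'i \<Rightarrow> complex" and I :: "spacetime set"
  assume \<psi>: "\<psi> \<in> l2" and \<psi>0: "\<psi> \<noteq> (\<lambda>_. 0)" and I: "open I" "I \<noteq> {}"
  have posop: "\<And>S. S \<in> sets borel \<Longrightarrow> positive_op (\<tau> S)" using pov by (simp add: POV_measure_def)
  have wca: "weakly_countably_additive \<tau>" using pov by (simp add: POV_measure_def)
  have bop: "\<And>S. S \<in> sets borel \<Longrightarrow> bounded_op (\<tau> S)" using posop by (simp add: positive_op_def)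
  have posv: "\<And>v S. v \<in> l2 \<Longrightarrow> S \<in> sets borel \<Longrightarrow> 0 \<le> l2_inner v (\<tau> S v)"
    using posop by (simp add: positive_op_def)
  have Ib: "I \<in> sets borel" using I(1) by simp
  have nn: "0 \<le> l2_inner \<psi> (\<tau> I \<psi>)" by (rule posv[OF \<psi> Ib])
  have Ul: "\<And>x v. v \<in> l2 \<Longrightarrow> U x v \<in> l2" using U_bop[OF P] bop_l2 by blast
  show "0 < l2_inner \<psi> (\<tau> I \<psi>)"
  proof (rule ccontr)
    assume "\<not> 0 < l2_inner \<psi> (\<tau> I \<psi>)"
    then have zI: "l2_inner \<psi> (\<tau> I \<psi>) = 0" using nn by (simp add: less_le)
    obtain a where a: "a \<in> I" using I(2) by auto
    obtain \<epsilon> where \<epsilon>: "0 < \<epsilon>" "ball a \<epsilon> \<subseteq> I" using I(1) a open_contains_ball_eq by blast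
    define r where "r = \<epsilon> / 2"
    have r: "0 < r" using \<epsilon> by (simp add: r_def)
    define B where "B = ball a r"
    have Bb: "B \<in> sets borel" by (simp add: B_def)
    define \<nu> where "\<nu> = qmeas \<tau> \<psi>"
    have posb: "\<And>S. S \<in> sets borel \<Longrightarrow> 0 \<le> l2_inner \<psi> (\<tau> S \<psi>)" using posv[OF \<psi>] .
    have \<nu>e: "\<And>S. S \<in> sets borel \<Longrightarrow> emeasure \<nu> S = ennreal (Re (l2_inner \<psi> (\<tau> S \<psi>)))"
      unfolding \<nu>_def by (rule qmeas_emeasure[OF wca \<psi> posb])
    have \<nu>s: "sets \<nu> = sets borel" by (simp add: \<nu>_def qmeas_sets)
    have step1: "l2_inner \<psi> (\<tau> (ball (a + x) r) \<psi>) = 0" if x: "norm x < r" for x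
    proof -
      have sub: "ball (a + x) r \<subseteq> I"
      proof
        fix y assume y: "y \<in> ball (a + x) r"
        have "dist a y \<le> dist a (a + x) + dist (a + x) y" by (rule dist_triangle)
        also have "dist a (a + x) = norm x" by (simp add: dist_norm)
        finally have "dist a y < \<epsilon>" using x y by (simp add: r_def)
        then show "y \<in> I" using \<epsilon> by auto
      qed
      have "emeasure \<nu> (ball (a + x) r) \<le> emeasure \<nu> I"
        by (rule emeasure_mono[OF sub]) (simp add: \<nu>s Ib)
      also have "\<dots> = 0" using \<nu>e[OF Ib] zI by simp
      finally have "ennreal (Re (l2_inner \<psi> (\<tau> (ball (a + x) r) \<psi>))) = 0" using \<nu>e[of "ball (a + x) r"] by simp
      then have "Re (l2_inner \<psi> (\<tau> (ball (a + x) r) \<psi>)) \<le> 0" using ennreal_eq_0_iff by blast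
      moreover have "0 \<le> l2_inner \<psi> (\<tau> (ball (a + x) r) \<psi>)" by (rule posb) simp
      ultimately show ?thesis by (simp add: less_eq_complex_def complex_eq_iff)
    qed
    have coveq: "\<tau> (ball (a + x) r) \<psi> = U x (\<tau> B (U (-x) \<psi>))" for x
    proof -
      have "U (- (-x)) (\<tau> ((\<lambda>y. y + (-x)) ` ball (a + x) r) (U (-x) \<psi>)) = \<tau> (ball (a + x) r) \<psi>"
        using bspec[OF spec[OF bspec[OF cov, of "ball (a + x) r"], of "-x"] \<psi>] by simp
      moreover have "(\<lambda>y. y + (-x)) ` ball (a + x) r = B" unfolding ball_translate B_def by simp
      ultimately show ?thesis by simp
    qed
    have hx: "l2_inner \<psi> (\<tau> (ball (a + x) r) \<psi>) = l2_inner (U (-x) \<psi>) (\<tau> B (U (-x) \<psi>))" for x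
    proof -
      have v: "U (-x) \<psi> \<in> l2" using Ul[OF \<psi>] .
      have w: "\<tau> B (U (-x) \<psi>) \<in> l2" using bop_l2[OF bop[OF Bb] v] .
      have "l2_inner \<psi> (\<tau> (ball (a + x) r) \<psi>) = l2_inner \<psi> (U x (\<tau> B (U (-x) \<psi>)))" using coveq by simp
      also have "\<dots> = cnj (l2_inner (\<tau> B (U (-x) \<psi>)) (U (-x) \<psi>))" by (rule U_adj[OF P \<psi> w])
      also have "\<dots> = l2_inner (U (-x) \<psi>) (\<tau> B (U (-x) \<psi>))" by (rule inner_cnj_sym[symmetric])
      finally show ?thesis .
    qed
    have Gzero: "l2_inner (\<tau> B \<phi>) (U y \<psi>) = 0" if \<phi>: "\<phi> \<in> l2" for \<phi> y
    proof -
      define \<eta> where "\<eta> = \<tau> B \<phi>"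
      have \<eta>: "\<eta> \<in> l2" unfolding \<eta>_def using bop_l2[OF bop[OF Bb] \<phi>] .
      define G where "G = (\<lambda>y. l2_inner \<eta> (U y \<psi>))"
      have Grepr: "\<And>y. G y = (\<Sum>j<4. cc j * (\<integral>k. cis (mink y k) \<partial>spectral_measure E (lc 1 \<eta> (dd j) \<psi>)))"
        unfolding G_def by (rule G_repr[OF P \<eta> \<psi>])
      have vl: "\<And>j. lc 1 \<eta> (dd j) \<psi> \<in> l2" using l2_lc[OF \<eta> \<psi>] .
      have "G y = 0"
      proof (rule fourier_zero[OF _ _ _ Grepr r])
        show "\<And>j. j < 4 \<Longrightarrow> finite_measure (spectral_measure E (lc 1 \<eta> (dd j) \<psi>))"
          using spectral_props(2)[OF P vl] .
        show "\<And>j. j < 4 \<Longrightarrow> sets (spectral_measure E (lc 1 \<eta> (dd j) \<psi>)) = sets borel"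
          using spectral_props(1)[OF P vl] .
        show "\<And>j. j < 4 \<Longrightarrow> AE k in spectral_measure E (lc 1 \<eta> (dd j) \<psi>). k \<in> future_cone"
          using spectral_props(3)[OF P vl] .
        fix z :: spacetime assume z: "z \<in> ball 0 r"
        define x where "x = - z"
        have nx: "norm x < r" using z by (simp add: x_def)
        have v: "U (-x) \<psi> \<in> l2" using Ul[OF \<psi>] .
        have k0: "l2_inner (U (-x) \<psi>) (\<tau> B (U (-x) \<psi>)) = 0" using step1[OF nx] hx[of x] by simp
        have k1: "l2_inner \<phi> (\<tau> B (U (-x) \<psi>)) = 0"
          by (rule pos_kernel[OF posop[OF Bb] v k0 \<phi>])
        have "G z = l2_inner \<eta> (U (-x) \<psi>)" by (simp add: G_def x_def)
        also have "\<dots> = cnj (l2_inner (U (-x) \<psi>) (\<tau> B \<phi>))" unfolding \<eta>_def by (rule inner_cnj_sym)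
        also have "l2_inner (U (-x) \<psi>) (\<tau> B \<phi>) = cnj (l2_inner \<phi> (\<tau> B (U (-x) \<psi>)))"
          by (rule herm[OF posop[OF Bb] v \<phi>])
        finally show "G z = 0" using k1 by simp
      qed
      then show ?thesis by (simp add: G_def \<eta>_def)
    qed
    have hall: "l2_inner \<psi> (\<tau> (ball (a + x) r) \<psi>) = 0" for x
    proof -
      have v: "U (-x) \<psi> \<in> l2" using Ul[OF \<psi>] .
      have "l2_inner \<psi> (\<tau> (ball (a + x) r) \<psi>) = cnj (l2_inner (\<tau> B (U (-x) \<psi>)) (U (-x) \<psi>))"
        unfolding hx by (rule inner_cnj_sym)
      also have "l2_inner (\<tau> B (U (-x) \<psi>)) (U (-x) \<psi>) = 0" by (rule Gzero[OF v])
      finally show ?thesis by simp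
    qed
    have null: "ball d r \<in> null_sets \<nu>" for d
    proof -
      have e: "ball d r = ball (a + (d - a)) r" by simp
      have "emeasure \<nu> (ball d r) = 0" unfolding e using \<nu>e[of "ball (a + (d - a)) r"] hall[of "d - a"] by simp
      then show ?thesis by (simp add: null_sets_def \<nu>s)
    qed
    obtain D :: "spacetime set" where D: "countable D" "\<And>X. open X \<Longrightarrow> X \<noteq> {} \<Longrightarrow> \<exists>d\<in>D. d \<in> X"
      by (rule countable_dense_setE) blast
    have cover: "UNIV = (\<Union>d\<in>D. ball d r)"
    proof (intro set_eqI iffI)
      fix x :: spacetime
      obtain d where "d \<in> D" "d \<in> ball x r" using D(2)[of "ball x r"] r by auto
      then show "x \<in> (\<Union>d\<in>D. ball d r)" by (auto simp: dist_commute)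
    qed auto
    have "UNIV \<in> null_sets \<nu>" unfolding cover by (rule null_sets_UN'[OF D(1) null])
    then have "emeasure \<nu> UNIV = 0" by auto
    moreover have "emeasure \<nu> UNIV = ennreal (Re (l2_inner \<psi> \<psi>))"
      using \<nu>e[of UNIV] norm \<psi> by (simp add: normalized_def)
    moreover have "0 < Re (l2_inner \<psi> \<psi>)" by (rule inner_self_pos[OF \<psi> \<psi>0])
    ultimately show False by simp
  qed
qed


end
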